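(* For infinitely many $n$, any randomized algorithm that, given a set $V$ of $n$ elements with pair weights $w$ accessible only through edge-weight queries (each query returns $w(uv)$ for one pair) and a target $c$, outputs the exact optimum value of diameter partitioning with success probability at least $2/3$ must make $\Omega(n^2)$ edge-weight queries in the worst case. This holds even when the weights form a metric taking only the values $1$ and $2$. The same statement holds for 2-MDCC in place of diameter partitioning.
   Context: For $S\subseteq V$, $\mathrm{diam}(S)=\max_{\{u,v\}\subseteq S}w(uv)$ with $\mathrm{diam}(S)=-\infty$ if $|S|\le1$. Diameter partitioning with target $c$: find the minimum over partitions $V=V_1\,\dot\cup\,V_2$ with $|V_1|=c$ of $\max\{\mathrm{diam}(V_1),\mathrm{diam}(V_2)\}$. 2-MDCC with target $c$: find the maximum over partitions $V=V_1\,\dot\cup\,V_2$ with $|V_1|=c$ of the minimum weight $w(uv)$ over pairs $\{u,v\}$ lying in the same class. *)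

theory Defs
  imports "HOL-Probability.Probability"
begin

text \<open>We represent w as a function nat => nat => real that is symmetric and
  canonically 0 outside the distinct pairs of {0..<n} (so that queries outside
  the instance reveal nothing).  The hard instances are required to use only
  weights 1 and 2 on distinct pairs (such weights automatically form a metric).\<close>

definition weights12 :: "nat \<Rightarrow> (nat \<Rightarrow> nat \<Rightarrow> real) set" where
  "weights12 n = {w. (\<forall>u v. w u v = w v u)
                    \<and> (\<forall>u v. (u = v \<or> u \<ge> n \<or> v \<ge> n) \<longrightarrow> w u v = 0)
                    \<and> (\<forall>u<n. \<forall>v<n. u \<noteq> v \<longrightarrow> w u v \<in> {1, 2})}"

definition diam :: "(nat \<Rightarrow> nat \<Rightarrow> real) \<Rightarrow> nat set \<Rightarrow> ereal" where
  "diam w S = (if card S \<le> 1 then -\<infinity>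
               else Max {ereal (w u v) | u v. u \<in> S \<and> v \<in> S \<and> u \<noteq> v})"

definition diam_partition :: "nat \<Rightarrow> nat \<Rightarrow> (nat \<Rightarrow> nat \<Rightarrow> real) \<Rightarrow> ereal" where
  "diam_partition n c w =
     (INF V1 \<in> {V1. V1 \<subseteq> {0..<n} \<and> card V1 = c}. max (diam w V1) (diam w ({0..<n} - V1)))"

definition mdcc2 :: "nat \<Rightarrow> nat \<Rightarrow> (nat \<Rightarrow> nat \<Rightarrow> real) \<Rightarrow> ereal" where
  "mdcc2 n c w =
     (SUP V1 \<in> {V1. V1 \<subseteq> {0..<n} \<and> card V1 = c}.
        INF p \<in> {(u, v). u < n \<and> v < n \<and> u \<noteq> v \<and> (u \<in> V1 \<longleftrightarrow> v \<in> V1)}. ereal (w (fst p) (snd p)))"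

datatype 'o qtree = Leaf 'o | Query "nat \<times> nat" "real \<Rightarrow> 'o qtree"

primrec run :: "'o qtree \<Rightarrow> (nat \<Rightarrow> nat \<Rightarrow> real) \<Rightarrow> 'o" where
  "run (Leaf x) w = x"
| "run (Query p f) w = run (f (w (fst p) (snd p))) w"

primrec num_queries :: "'o qtree \<Rightarrow> (nat \<Rightarrow> nat \<Rightarrow> real) \<Rightarrow> nat" where
  "num_queries (Leaf x) w = 0"
| "num_queries (Query p f) w = Suc (num_queries (f (w (fst p) (snd p))) w)"

text \<open>A randomized algorithm for instances of size n: a probability space M of
  random seeds and, for each target c and seed r, a deterministic query tree.\<close>

definition solves_whp ::
  "real measure \<Rightarrow> (nat \<Rightarrow> real \<Rightarrow> ereal qtree) \<Rightarrow>
   (nat \<Rightarrow> nat \<Rightarrow> (nat \<Rightarrow> nat \<Rightarrow> real) \<Rightarrow> ereal) \<Rightarrow> nat \<Rightarrow> bool" where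
  "solves_whp M A OPT n \<longleftrightarrow>
     (\<forall>c\<le>n. \<forall>w\<in>weights12 n.
        measure M {r \<in> space M. run (A c r) w = OPT n c w} \<ge> 2/3)"

definition quadratic_query_lower_bound ::
  "(nat \<Rightarrow> nat \<Rightarrow> (nat \<Rightarrow> nat \<Rightarrow> real) \<Rightarrow> ereal) \<Rightarrow> bool" where
  "quadratic_query_lower_bound OPT \<longleftrightarrow>
     (\<exists>\<delta>>0. \<forall>N. \<exists>n\<ge>N.
        \<forall>M A. prob_space M \<longrightarrow> solves_whp M A OPT n \<longrightarrow>
          (\<exists>c\<le>n. \<exists>w\<in>weights12 n. \<exists>r\<in>space M.
             real (num_queries (A c r) w) \<ge> \<delta> * real n ^ 2))"

end

theory Submission
  imports Defs
begin
lemma sum_measure_le: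
  assumes P: "prob_space M" and fin: "finite I" and S: "\<forall>i\<in>I. X i \<in> sets M"
    and B: "\<forall>x\<in>space M. real (card {i\<in>I. x \<in> X i}) \<le> K"
  shows "(\<Sum>i\<in>I. measure M (X i)) \<le> K"
proof -
  interpret prob_space M by fact
  have "(\<Sum>i\<in>I. measure M (X i)) = (\<Sum>i\<in>I. integral\<^sup>L M (indicator (X i)))"
    using S by (intro sum.cong) auto
  also have "\<dots> = integral\<^sup>L M (\<lambda>x. \<Sum>i\<in>I. indicator (X i) x)"
    using S by (subst Bochner_Integration.integral_sum[where M=M and I=I and f="\<lambda>i. indicator (X i)"]) (auto intro!: integrable_real_indicator simp: less_top[symmetric])
  also have "\<dots> \<le> integral\<^sup>L M (\<lambda>x. K)"
  proof (rule integral_mono)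
    show "integrable M (\<lambda>x. \<Sum>i\<in>I. indicator (X i) x :: real)"
      using S by (intro Bochner_Integration.integrable_sum) (auto intro!: integrable_real_indicator simp: less_top[symmetric])
    show "integrable M (\<lambda>x. K)" by auto
    fix x assume "x \<in> space M"
    have "(\<Sum>i\<in>I. indicator (X i) x :: real) = (\<Sum>i\<in>{i\<in>I. x \<in> X i}. 1)"
      using fin by (simp add: sum.inter_filter indicator_def Int_def)
    also have "\<dots> = real (card {i\<in>I. x \<in> X i})" by (simp add: Int_def)
    finally show "(\<Sum>i\<in>I. indicator (X i) x :: real) \<le> K" using B \<open>x \<in> space M\<close> by simp
  qed
  also have "\<dots> = K" by (simp add: prob_space)
  finally show ?thesis .
qed
primrec qset :: "'o qtree \<Rightarrow> (nat \<Rightarrow> nat \<Rightarrow> real) \<Rightarrow> (nat \<times> nat) set" where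
  "qset (Leaf x) w = {}"
| "qset (Query p f) w = insert (min (fst p) (snd p), max (fst p) (snd p)) (qset (f (w (fst p) (snd p))) w)"

lemma qset_card: "finite (qset T w) \<and> card (qset T w) \<le> num_queries T w"
proof (induction T)
  case (Leaf x) then show ?case by simp
next
  case (Query p f)
  have "finite (qset (f v) w) \<and> card (qset (f v) w) \<le> num_queries (f v) w" for v
    by (rule Query.IH) simp
  then show ?case by (simp add: card_insert_if le_SucI)
qed

lemma run_agree:
  assumes "\<forall>x y. (min x y, max x y) \<noteq> i \<longrightarrow> w' x y = w x y" and "i \<notin> qset T w"
  shows "run T w' = run T w"
  using assms(2)
proof (induction T)
  case (Leaf x) then show ?case by simp
next
  case (Query p f)
  have ne: "(min (fst p) (snd p), max (fst p) (snd p)) \<noteq> i" using Query.prems by auto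
  hence "w' (fst p) (snd p) = w (fst p) (snd p)" using assms(1) by blast
  moreover have "i \<notin> qset (f (w (fst p) (snd p))) w" using Query.prems by simp
  ultimately show ?case using Query.IH by simp
qed

lemma abstract_lb:
  fixes OPT :: "nat \<Rightarrow> nat \<Rightarrow> (nat \<Rightarrow> nat \<Rightarrow> real) \<Rightarrow> ereal"
    and W :: "nat \<times> nat \<Rightarrow> nat \<Rightarrow> nat \<Rightarrow> real"
  assumes fin: "finite I" and cn: "c \<le> n" and w0: "w0 \<in> weights12 n"
    and Wi: "\<forall>i\<in>I. W i \<in> weights12 n"
    and diff: "\<forall>i\<in>I. OPT n c (W i) \<noteq> OPT n c w0"
    and agree: "\<forall>i\<in>I. \<forall>x y. (min x y, max x y) \<noteq> i \<longrightarrow> W i x y = w0 x y"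
    and P: "prob_space M" and sol: "solves_whp M A OPT n"
  shows "\<exists>r\<in>space M. real (card I) / 3 \<le> real (num_queries (A c r) w0)"
proof (rule ccontr)
  assume "\<not> ?thesis"
  hence lt: "\<forall>r\<in>space M. real (num_queries (A c r) w0) < real (card I) / 3" by force
  interpret prob_space M by fact
  define S where "S w = {r \<in> space M. run (A c r) w = OPT n c w}" for w
  have Sge: "measure M (S w) \<ge> 2/3" if "w \<in> weights12 n" for w
    using sol cn that unfolding solves_whp_def S_def by blast
  have Sset: "S w \<in> sets M" if "w \<in> weights12 n" for w
  proof (rule ccontr)
    assume "S w \<notin> sets M"
    hence "measure M (S w) = 0" by (rule measure_notin_sets)
    with Sge[OF that] show False by simp
  qed
  define X where "X i = S w0 \<inter> S (W i)" for i
  have Xset: "\<forall>i\<in>I. X i \<in> sets M" using Sset w0 Wi unfolding X_def by blast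
  have Xge: "measure M (X i) \<ge> 1/3" if "i \<in> I" for i
  proof -
    have a: "S w0 \<in> sets M" "S (W i) \<in> sets M" using Sset w0 Wi that by auto
    have "measure M (S w0 \<union> S (W i)) = measure M (S w0) + measure M (S (W i)) - measure M (X i)"
      unfolding X_def using a by (intro measure_Un3) (auto simp: fmeasurable_eq_sets)
    moreover have "measure M (S w0 \<union> S (W i)) \<le> 1" by simp
    ultimately show ?thesis using Sge[OF w0] Sge[of "W i"] Wi that by auto
  qed
  have cnt: "real (card {i\<in>I. r \<in> X i}) \<le> (real (card I) - 1) / 3" if r: "r \<in> space M" for r
  proof -
    have sub: "{i\<in>I. r \<in> X i} \<subseteq> qset (A c r) w0"
    proof
      fix i assume i: "i \<in> {i\<in>I. r \<in> X i}"
      show "i \<in> qset (A c r) w0"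
      proof (rule ccontr)
        assume "i \<notin> qset (A c r) w0"
        hence "run (A c r) (W i) = run (A c r) w0" using agree i by (intro run_agree) auto
        moreover have "run (A c r) (W i) = OPT n c (W i)" "run (A c r) w0 = OPT n c w0"
          using i unfolding X_def S_def by auto
        ultimately show False using diff i by auto
      qed
    qed
    have "card {i\<in>I. r \<in> X i} \<le> card (qset (A c r) w0)"
      using sub qset_card by (intro card_mono) auto
    also have "\<dots> \<le> num_queries (A c r) w0" using qset_card by auto
    finally have "real (card {i\<in>I. r \<in> X i}) \<le> real (num_queries (A c r) w0)" by simp
    hence "real (3 * card {i\<in>I. r \<in> X i}) < real (card I)" using lt r by force
    hence "3 * card {i\<in>I. r \<in> X i} < card I" by linarith
    hence "3 * card {i\<in>I. r \<in> X i} \<le> card I - 1" by linarith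
    hence "real (3 * card {i\<in>I. r \<in> X i}) \<le> real (card I) - 1"
      using \<open>3 * card {i\<in>I. r \<in> X i} < card I\<close> by linarith
    thus ?thesis by simp
  qed
  have "(\<Sum>i\<in>I. measure M (X i)) \<le> (real (card I) - 1) / 3"
    using sum_measure_le[OF P fin Xset] cnt by blast
  moreover have "(\<Sum>i\<in>I. measure M (X i)) \<ge> (\<Sum>i\<in>I. 1/3)"
    using Xge by (intro sum_mono) auto
  ultimately show False by simp
qed
definition g :: "nat \<Rightarrow> real \<Rightarrow> real \<Rightarrow> nat \<times> nat \<Rightarrow> nat \<Rightarrow> nat \<Rightarrow> real" where
  "g k lo hi e u v = (if u = v \<or> u \<ge> 2*k \<or> v \<ge> 2*k then 0
     else if (u < k \<longleftrightarrow> v < k) \<and> (min u v, max u v) \<noteq> e then lo else hi)"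

lemma g_weights: "lo \<in> {1,2} \<Longrightarrow> hi \<in> {1,2} \<Longrightarrow> g k lo hi e \<in> weights12 (2*k)"
  unfolding weights12_def g_def by (auto simp: min.commute max.commute)

lemma g_agree: "(min x y, max x y) \<noteq> i \<Longrightarrow> g k lo hi i x y = g k lo hi (0,0) x y"
  unfolding g_def by auto

lemma core:
  assumes V1: "V1 \<subseteq> {0..<2*k}" "card V1 = k" and ab: "a < b" "b < k"
  shows "\<exists>x y. x \<noteq> y \<and> x < 2*k \<and> y < 2*k \<and> (x \<in> V1 \<longleftrightarrow> y \<in> V1) \<and> g k lo hi (a,b) x y = hi"
proof (cases "(a \<in> V1 \<longleftrightarrow> b \<in> V1)")
  case True
  then show ?thesis using ab by (intro exI[of _ a] exI[of _ b]) (auto simp: g_def)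
next
  case False
  then obtain x where x: "x \<in> V1" "x < k" using ab by (metis order.strict_trans)
  have "\<not> V1 \<subseteq> {0..<k}"
  proof
    assume "V1 \<subseteq> {0..<k}"
    hence "V1 = {0..<k}" using V1 by (intro card_subset_eq) auto
    thus False using False ab by auto
  qed
  then obtain y where y0: "y \<in> V1" "y \<notin> {0..<k}" by blast
  hence y: "y \<in> V1" "y \<ge> k" by auto
  have "y < 2*k" using y V1 by auto
  then show ?thesis using x y by (intro exI[of _ x] exI[of _ y]) (auto simp: g_def)
qed

lemma diam_le:
  assumes "finite S" "\<forall>u\<in>S. \<forall>v\<in>S. u \<noteq> v \<longrightarrow> w u v \<le> t"
  shows "diam w S \<le> ereal t"
proof -
  have fin: "finite {ereal (w u v) | u v. u \<in> S \<and> v \<in> S \<and> u \<noteq> v}"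
  proof (rule finite_subset)
    show "{ereal (w u v) | u v. u \<in> S \<and> v \<in> S \<and> u \<noteq> v} \<subseteq> (\<lambda>(u,v). ereal (w u v)) ` (S \<times> S)"
      by auto
    show "finite ((\<lambda>(u,v). ereal (w u v)) ` (S \<times> S))" using assms(1) by auto
  qed
  show ?thesis
  proof (cases "card S \<le> 1")
    case True then show ?thesis by (simp add: diam_def)
  next
    case False
    then obtain u v where "u \<in> S" "v \<in> S" "u \<noteq> v"
      using assms(1) by (auto simp: card_le_Suc0_iff_eq)
    hence ne: "{ereal (w u v) | u v. u \<in> S \<and> v \<in> S \<and> u \<noteq> v} \<noteq> {}" by blast
    show ?thesis using False fin ne assms(2) unfolding diam_def by (auto simp: Max_le_iff)
  qed
qed

lemma diam_ge:
  assumes "finite S" "u \<in> S" "v \<in> S" "u \<noteq> v"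
  shows "ereal (w u v) \<le> diam w S"
proof -
  have fin: "finite {ereal (w u v) | u v. u \<in> S \<and> v \<in> S \<and> u \<noteq> v}"
  proof (rule finite_subset)
    show "{ereal (w u v) | u v. u \<in> S \<and> v \<in> S \<and> u \<noteq> v} \<subseteq> (\<lambda>(u,v). ereal (w u v)) ` (S \<times> S)"
      by auto
    show "finite ((\<lambda>(u,v). ereal (w u v)) ` (S \<times> S))" using assms(1) by auto
  qed
  have "card {u, v} \<le> card S" using assms by (intro card_mono) auto
  hence "\<not> card S \<le> 1" using assms by auto
  thus ?thesis using fin assms unfolding diam_def by (auto intro!: Max_ge)
qed

lemma diam_w0: "k \<ge> 1 \<Longrightarrow> diam_partition (2*k) k (g k 1 2 (0,0)) \<le> 1"
proof -
  assume k: "k \<ge> 1"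
  let ?w = "g k 1 2 (0,0)"
  have "diam_partition (2*k) k ?w \<le> max (diam ?w {0..<k}) (diam ?w ({0..<2*k} - {0..<k}))"
    unfolding diam_partition_def by (rule INF_lower) auto
  also have "\<dots> \<le> 1"
  proof -
    have "diam ?w {0..<k} \<le> ereal 1" by (rule diam_le) (auto simp: g_def)
    moreover have "diam ?w ({0..<2*k} - {0..<k}) \<le> ereal 1" by (rule diam_le) (auto simp: g_def)
    ultimately show ?thesis by (simp add: one_ereal_def)
  qed
  finally show ?thesis .
qed

lemma diam_wi: "a < b \<Longrightarrow> b < k \<Longrightarrow> diam_partition (2*k) k (g k 1 2 (a,b)) \<ge> 2"
  unfolding diam_partition_def
proof (rule INF_greatest)
  fix V1 assume "V1 \<in> {V1. V1 \<subseteq> {0..<2 * k} \<and> card V1 = k}" and ab: "a < b" "b < k"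
  hence V1: "V1 \<subseteq> {0..<2*k}" "card V1 = k" by auto
  obtain x y where xy: "x \<noteq> y" "x < 2*k" "y < 2*k" "(x \<in> V1 \<longleftrightarrow> y \<in> V1)" "g k 1 2 (a,b) x y = 2"
    using core[OF V1 ab] by blast
  have fin: "finite V1" using V1 finite_subset by blast
  show "2 \<le> max (diam (g k 1 2 (a,b)) V1) (diam (g k 1 2 (a,b)) ({0..<2 * k} - V1))"
  proof (cases "x \<in> V1")
    case True
    have "ereal (g k 1 2 (a,b) x y) \<le> diam (g k 1 2 (a,b)) V1"
      using True xy fin by (intro diam_ge) auto
    then show ?thesis using xy by (auto simp: le_max_iff_disj)
  next
    case False
    have "ereal (g k 1 2 (a,b) x y) \<le> diam (g k 1 2 (a,b)) ({0..<2 * k} - V1)"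
      using False xy by (intro diam_ge) auto
    then show ?thesis using xy by (auto simp: le_max_iff_disj)
  qed
qed

lemma mdcc_w0: "k \<ge> 1 \<Longrightarrow> mdcc2 (2*k) k (g k 2 1 (0,0)) \<ge> 2"
  unfolding mdcc2_def
proof (rule SUP_upper2[of "{0..<k}"])
  show "{0..<k} \<in> {V1. V1 \<subseteq> {0..<2 * k} \<and> card V1 = k}" by auto
  show "2 \<le> (INF p\<in>{(u, v). u < 2 * k \<and> v < 2 * k \<and> u \<noteq> v \<and> (u \<in> {0..<k}) = (v \<in> {0..<k})}.
          ereal (g k 2 1 (0, 0) (fst p) (snd p)))"
    by (rule INF_greatest) (auto simp: g_def)
qed

lemma mdcc_wi: "a < b \<Longrightarrow> b < k \<Longrightarrow> mdcc2 (2*k) k (g k 2 1 (a,b)) \<le> 1"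
  unfolding mdcc2_def
proof (rule SUP_least)
  fix V1 assume "V1 \<in> {V1. V1 \<subseteq> {0..<2 * k} \<and> card V1 = k}" and ab: "a < b" "b < k"
  hence V1: "V1 \<subseteq> {0..<2*k}" "card V1 = k" by auto
  obtain x y where xy: "x \<noteq> y" "x < 2*k" "y < 2*k" "(x \<in> V1 \<longleftrightarrow> y \<in> V1)" "g k 2 1 (a,b) x y = 1"
    using core[OF V1 ab] by blast
  show "(INF p\<in>{(u, v). u < 2 * k \<and> v < 2 * k \<and> u \<noteq> v \<and> (u \<in> V1) = (v \<in> V1)}.
          ereal (g k 2 1 (a,b) (fst p) (snd p))) \<le> 1"
    by (rule INF_lower2[of "(x,y)"]) (use xy in auto)
qed

lemma final_lb:
  assumes lohi: "lo \<in> {1,2}" "hi \<in> {1,2}"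
    and D: "\<And>h a b. h \<ge> 1 \<Longrightarrow> a < b \<Longrightarrow> b < 2*h \<Longrightarrow>
       OPT (2*(2*h)) (2*h) (g (2*h) lo hi (a,b)) \<noteq> OPT (2*(2*h)) (2*h) (g (2*h) lo hi (0,0))"
  shows "quadratic_query_lower_bound OPT"
  unfolding quadratic_query_lower_bound_def
proof (rule exI[of _ "1/48 :: real"], intro conjI allI)
  fix N :: nat
  show "0 < (1/48::real)" by simp
  define h where "h = N + 1"
  define k where "k = 2*h"
  define n where "n = 2*k"
  have h1: "h \<ge> 1" unfolding h_def by simp
  show "\<exists>n\<ge>N. \<forall>M A. prob_space M \<longrightarrow> solves_whp M A OPT n \<longrightarrow>
          (\<exists>c\<le>n. \<exists>w\<in>weights12 n. \<exists>r\<in>space M. 1/48 * real n ^ 2 \<le> real (num_queries (A c r) w))"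
  proof (rule exI[of _ n], intro conjI allI impI)
    show "N \<le> n" unfolding n_def k_def h_def by simp
    fix M A
    assume P: "prob_space M" and sol: "solves_whp M A OPT n"
    define I where "I = {0..<h} \<times> {h..<2*h}"
    have finI: "finite I" unfolding I_def by simp
    have cardI: "card I = h * h" unfolding I_def by (simp add: card_cartesian_product)
    have w0: "g k lo hi (0,0) \<in> weights12 n" unfolding n_def using g_weights lohi by blast
    have Wi: "\<forall>i\<in>I. g k lo hi i \<in> weights12 n" unfolding n_def using g_weights lohi by blast
    have diff: "\<forall>i\<in>I. OPT n k (g k lo hi i) \<noteq> OPT n k (g k lo hi (0,0))"
    proof
      fix i assume "i \<in> I"
      then obtain a b where i: "i = (a,b)" "a < h" "h \<le> b" "b < 2*h" unfolding I_def by auto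
      show "OPT n k (g k lo hi i) \<noteq> OPT n k (g k lo hi (0,0))"
        unfolding n_def k_def i(1) using D[OF h1, of a b] i by simp
    qed
    have agree: "\<forall>i\<in>I. \<forall>x y. (min x y, max x y) \<noteq> i \<longrightarrow> g k lo hi i x y = g k lo hi (0,0) x y"
      using g_agree by blast
    have kn: "k \<le> n" unfolding n_def by simp
    obtain r where r: "r \<in> space M" "real (card I) / 3 \<le> real (num_queries (A k r) (g k lo hi (0,0)))"
      using abstract_lb[OF finI kn w0 Wi diff agree P sol] by blast
    have "1/48 * real n ^ 2 = real (card I) / 3"
      unfolding cardI n_def k_def by (simp add: power2_eq_square)
    with r show "\<exists>c\<le>n. \<exists>w\<in>weights12 n. \<exists>r\<in>space M. 1/48 * real n ^ 2 \<le> real (num_queries (A c r) w)"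
      using kn w0 by auto
  qed
qed

theorem theorem6:
  shows "quadratic_query_lower_bound diam_partition \<and> quadratic_query_lower_bound mdcc2"
proof
  show "quadratic_query_lower_bound diam_partition"
  proof (rule final_lb[of 1 2])
    fix h a b :: nat assume "h \<ge> 1" "a < b" "b < 2*h"
    have c1: "diam_partition (2*(2*h)) (2*h) (g (2*h) 1 2 (a,b)) \<ge> 2" using diam_wi \<open>a < b\<close> \<open>b < 2*h\<close> by blast
    have c2: "diam_partition (2*(2*h)) (2*h) (g (2*h) 1 2 (0,0)) \<le> 1" using diam_w0[of "2*h"] \<open>h \<ge> 1\<close> by simp
    show "diam_partition (2*(2*h)) (2*h) (g (2*h) 1 2 (a,b)) \<noteq> diam_partition (2*(2*h)) (2*h) (g (2*h) 1 2 (0,0))"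
    proof
      assume e: "diam_partition (2*(2*h)) (2*h) (g (2*h) 1 2 (a,b)) = diam_partition (2*(2*h)) (2*h) (g (2*h) 1 2 (0,0))"
      have "(2::ereal) \<le> 1" using c1 c2 e by (metis order_trans)
      thus False by simp
    qed
  qed auto
next
  show "quadratic_query_lower_bound mdcc2"
  proof (rule final_lb[of 2 1])
    fix h a b :: nat assume "h \<ge> 1" "a < b" "b < 2*h"
    have c1: "mdcc2 (2*(2*h)) (2*h) (g (2*h) 2 1 (a,b)) \<le> 1" using mdcc_wi \<open>a < b\<close> \<open>b < 2*h\<close> by blast
    have c2: "mdcc2 (2*(2*h)) (2*h) (g (2*h) 2 1 (0,0)) \<ge> 2" using mdcc_w0[of "2*h"] \<open>h \<ge> 1\<close> by simp
    show "mdcc2 (2*(2*h)) (2*h) (g (2*h) 2 1 (a,b)) \<noteq> mdcc2 (2*(2*h)) (2*h) (g (2*h) 2 1 (0,0))"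
    proof
      assume e: "mdcc2 (2*(2*h)) (2*h) (g (2*h) 2 1 (a,b)) = mdcc2 (2*(2*h)) (2*h) (g (2*h) 2 1 (0,0))"
      have "(2::ereal) \<le> 1" using c1 c2 e by (metis order_trans)
      thus False by simp
    qed
  qed auto
qed

end
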